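(* Consider the Markov process described in the context with $K=1$, satisfying Assumption (A) and the ergodicity condition (E). Then for every $x=(x_1,\dots,x_c)\in\{-1,1\}^c$ the equation $(\mathrm{E}_x)$ has at least one root $\beta_0\in(0,1)$.
   Context: Fix integers $c\ge 1$ and $K\ge1$ (in the claim $K=1$). Consider an irreducible continuous-time Markov process on $V\cup W$, where $V$ is finite and $W=\{\mathbf n=(n_0,\dots,n_c): n_0\in\{0,1,\dots\},\ n_i\in\{0,1\}\}$. For each $i\in\{1,\dots,c\}$ and integer $k\le K$ there are nonnegative rates $a_{k,i},b_{k,i},c_{k,i},d_{k,i}$. From $\mathbf n\in W$, for each $i$ and $k\in\{-n_0,\dots,K\}$, the process jumps (changing only coordinates $0$ and $i$) from $(n_0,n_i)=(n_0,0)$ to $(n_0+k,1)$ at rate $a_{k,i}$ and to $(n_0+k,0)$ at rate $b_{k,i}$, and from $(n_0,1)$ to $(n_0+k,1)$ at rate $c_{k,i}$ and to $(n_0+k,0)$ at rate $d_{k,i}$; from $\mathbf n$ it jumps into $V$ with total rate $\sum_i\sum_{k\le -n_0-1}((1-n_i)(a_{k,i}+b_{k,i})+n_i(c_{k,i}+d_{k,i}))$; no other transitions leave $W$, and from $V$ no transitions go to states with $n_0\ge K$. Let $A_i(z)=\sum_{k=-\infty}^K a_{k,i}z^{K-k}$ and similarly $B_i,C_i,D_i$ with $b,c,d$. Assumption (A): for each $i$: (i) $A_i(1),B_i(1),C_i(1),D_i(1)<\infty$; (ii) $A_i(1),D_i(1)>0$; (iii) $A_i'(1),B_i'(1),C_i'(1),D_i'(1)<\infty$;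 (iv) $a_{K,i}=0$ or $d_{K,i}=0$; (v) $b_{K,i}=c_{K,i}\ne0$. Ergodicity condition (E): $0<\sum_{i=1}^c\frac{1}{A_i(1)+D_i(1)}\bigl(D_i(1)(A_i'(1)-KA_i(1)+B_i'(1)-KB_i(1))+A_i(1)(C_i'(1)-KC_i(1)+D_i'(1)-KD_i(1))\bigr)$. Let $F_i(z)=z^K(A_i(1)+B_i(1)-C_i(1)-D_i(1))-B_i(z)+C_i(z)$. For real $\beta_0\in[0,1]$ let $R_i(\beta_0)=\sqrt{F_i(\beta_0)^2+4A_i(\beta_0)D_i(\beta_0)}$ (nonnegative square root). For $x\in\{-1,1\}^c$, equation $(\mathrm E_x)$ in the unknown $\beta_0$ is \[0=\sum_{i=1}^c\Bigl(x_iR_i(\beta_0)+B_i(\beta_0)+C_i(\beta_0)-\beta_0^K\bigl(A_i(1)+B_i(1)+C_i(1)+D_i(1)\bigr)\Bigr).\] *)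

theory Defs
  imports "HOL-Analysis.Analysis"
begin

text \<open>Rates are given as functions r k i (k :: int, the jump size, with k \<le> K = 1;
  i the server index in {1..c}). With K = 1 the generating function
  R_i(z) = sum_{k \<le> 1} r_{k,i} z^(1-k) is written as a power series in n = 1 - k.\<close>

definition genf :: "(int \<Rightarrow> nat \<Rightarrow> real) \<Rightarrow> nat \<Rightarrow> real \<Rightarrow> real" where
  "genf r i z = (\<Sum>n. r (1 - int n) i * z ^ n)"

definition genf_deriv1 :: "(int \<Rightarrow> nat \<Rightarrow> real) \<Rightarrow> nat \<Rightarrow> real" where
  "genf_deriv1 r i = (\<Sum>n. real n * r (1 - int n) i)"

end

theory Submission
  imports Defs "HOL-Analysis.Analysis"
begin
definition Qs :: "(nat \<Rightarrow> real) \<Rightarrow> real \<Rightarrow> real" where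
  "Qs p y = (\<Sum>n. p n * (\<Sum>j<n. y ^ j))"

lemma geo_le: "0 \<le> (y::real) \<Longrightarrow> y \<le> 1 \<Longrightarrow> 0 \<le> (\<Sum>j<n. y ^ j) \<and> (\<Sum>j<n. y ^ j) \<le> real n"
proof -
  assume h: "0 \<le> y" "y \<le> 1"
  have "(\<Sum>j<n. y ^ j) \<le> (\<Sum>j<n. 1)" by (rule sum_mono) (simp add: h power_le_one)
  then show ?thesis using h by (simp add: sum_nonneg)
qed

lemma Qs_summable:
  assumes nn: "\<And>n. p n \<ge> 0" and s: "summable (\<lambda>n. real n * p n)" and y: "0 \<le> y" "y \<le> 1"
  shows "summable (\<lambda>n. p n * (\<Sum>j<n. y ^ j))"
proof (rule summable_comparison_test'[OF s])
  fix n
  have "p n * (\<Sum>j<n. y ^ j) \<le> p n * real n" using geo_le[OF y, of n] nn[of n] by (intro mult_left_mono) auto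
  then show "norm (p n * (\<Sum>j<n. y ^ j)) \<le> real n * p n"
    using geo_le[OF y, of n] nn[of n] by (simp add: mult.commute)
qed

lemma Qs_eq:
  assumes nn: "\<And>n. p n \<ge> 0" and s0: "summable p" and s: "summable (\<lambda>n. real n * p n)" and y: "0 \<le> y" "y \<le> 1"
  shows "(\<Sum>n. p n * y ^ n) = (\<Sum>n. p n) - (1 - y) * Qs p y"
proof -
  have s1: "summable (\<lambda>n. p n * y ^ n)"
  proof (rule summable_comparison_test'[OF s0])
    fix n show "norm (p n * y ^ n) \<le> p n" using nn[of n] y
      by (simp add: abs_mult mult_left_le power_le_one)
  qed
  have "(\<Sum>n. p n) - (\<Sum>n. p n * y ^ n) = (\<Sum>n. p n - p n * y ^ n)"
    using suminf_diff[OF s0 s1] by simp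
  also have "\<dots> = (\<Sum>n. (1 - y) * (p n * (\<Sum>j<n. y ^ j)))"
    proof (rule suminf_cong)
      fix n have "p n - p n * y ^ n = p n * (1 - y ^ n)" by (simp add: algebra_simps)
      then show "p n - p n * y ^ n = (1 - y) * (p n * (\<Sum>j<n. y ^ j))" by (simp add: one_diff_power_eq)
    qed
  also have "\<dots> = (1 - y) * Qs p y"
    unfolding Qs_def using suminf_mult[OF Qs_summable[OF nn s y]] by simp
  finally show ?thesis by simp
qed

lemma Qs_cont:
  assumes nn: "\<And>n. p n \<ge> 0" and s: "summable (\<lambda>n. real n * p n)"
  shows "continuous_on {0..1} (Qs p)"
proof -
  have "uniform_limit {0..1} (\<lambda>n y. \<Sum>i<n. p i * (\<Sum>j<i. y ^ j)) (\<lambda>y. \<Sum>i. p i * (\<Sum>j<i. y ^ j)) sequentially"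
  proof (rule Weierstrass_m_test[OF _ s])
    fix n and y :: real assume "y \<in> {0..1}"
    then have y: "0 \<le> y" "y \<le> 1" by auto
    have "p n * (\<Sum>j<n. y ^ j) \<le> p n * real n" using geo_le[OF y, of n] nn[of n] by (intro mult_left_mono) auto
    then show "norm (p n * (\<Sum>j<n. y ^ j)) \<le> real n * p n"
      using geo_le[OF y, of n] nn[of n] by (simp add: mult.commute)
  qed
  then show ?thesis unfolding Qs_def
    by (rule uniform_limit_theorem[rotated]) (auto intro!: always_eventually continuous_intros)
qed

lemma Qs_one: "Qs p 1 = (\<Sum>n. real n * p n)"
  unfolding Qs_def by (simp add: mult.commute)

definition psiF :: "real \<Rightarrow> real \<Rightarrow> real \<Rightarrow> real \<Rightarrow> real \<Rightarrow> real \<Rightarrow> real \<Rightarrow> real \<Rightarrow> real \<Rightarrow> real" where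
 "psiF al de B1 C1 qa qb qc qd y =
   (let F = y*(al+B1-C1-de) - (B1-(1-y)*qb) + (C1-(1-y)*qc);
        R = sqrt (F\<^sup>2 + 4*(al-(1-y)*qa)*(de-(1-y)*qd)) in
   ((qb - qc - (al+B1-C1-de)) * (F + (al - de)) + 4*(-al*qd - de*qa + (1-y)*qa*qd)) / (R + (al+de)))"

lemma term_identity:
  fixes al de B1 C1 qa qb qc qd y xi :: real
  assumes al: "al \<ge> 0" and de: "de \<ge> 0" and pos: "al + de > 0"
    and A: "al - (1-y)*qa \<ge> 0" and D: "de - (1-y)*qd \<ge> 0"
  shows "xi * sqrt ((y*(al+B1-C1-de) - (B1-(1-y)*qb) + (C1-(1-y)*qc))\<^sup>2 + 4*(al-(1-y)*qa)*(de-(1-y)*qd))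
         + (B1-(1-y)*qb) + (C1-(1-y)*qc) - y*(al+B1+C1+de)
       = (xi - 1)*(al+de) + (1-y)*(xi * psiF al de B1 C1 qa qb qc qd y - qb - qc + (al+B1+C1+de))"
proof -
  define F where "F = y*(al+B1-C1-de) - (B1-(1-y)*qb) + (C1-(1-y)*qc)"
  define R where "R = sqrt (F\<^sup>2 + 4*(al-(1-y)*qa)*(de-(1-y)*qd))"
  have Rnn: "R \<ge> 0" unfolding R_def using A D by (intro real_sqrt_ge_zero) (simp add: add_nonneg_nonneg)
  have R2: "R\<^sup>2 = F\<^sup>2 + 4*(al-(1-y)*qa)*(de-(1-y)*qd)" unfolding R_def
    using A D by (intro real_sqrt_pow2) (simp add: add_nonneg_nonneg)
  have den: "R + (al+de) > 0" using Rnn pos by simp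
  have key: "(R - (al+de)) * (R + (al+de)) = (1-y) * ((qb - qc - (al+B1-C1-de)) * (F + (al - de)) + 4*(-al*qd - de*qa + (1-y)*qa*qd))"
  proof -
    have "(R - (al+de)) * (R + (al+de)) = R\<^sup>2 - (al+de)\<^sup>2" by (simp add: power2_eq_square algebra_simps)
    also have "\<dots> = (1-y) * ((qb - qc - (al+B1-C1-de)) * (F + (al - de)) + 4*(-al*qd - de*qa + (1-y)*qa*qd))"
      unfolding R2 F_def by (simp add: power2_eq_square algebra_simps)
    finally show ?thesis .
  qed
  have psi: "psiF al de B1 C1 qa qb qc qd y = ((qb - qc - (al+B1-C1-de)) * (F + (al - de)) + 4*(-al*qd - de*qa + (1-y)*qa*qd)) / (R + (al+de))"
    unfolding psiF_def F_def R_def Let_def ..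
  have RR: "R = (al+de) + (1-y) * psiF al de B1 C1 qa qb qc qd y"
    unfolding psi using key den by (simp add: field_simps)
  show ?thesis unfolding F_def[symmetric] R_def[symmetric] RR by (simp add: algebra_simps)
qed

lemma psi_one:
  fixes al de B1 C1 qa qb qc qd :: real
  assumes al: "al \<ge> 0" and de: "de \<ge> 0" and pos: "al + de > 0"
  shows "psiF al de B1 C1 qa qb qc qd 1 - qb - qc + (al+B1+C1+de)
     = -2 * ((1 / (al + de)) * (de * (qa - al + qb - B1) + al * (qc - C1 + qd - de)))"
proof -
  have s: "sqrt ((al - de)\<^sup>2 + 4*al*de) = al + de"
  proof -
    have "(al - de)\<^sup>2 + 4*al*de = (al+de)\<^sup>2" by (simp add: power2_eq_square algebra_simps)
    then show ?thesis using al de by simp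
  qed
  have "psiF al de B1 C1 qa qb qc qd 1 = ((qb - qc - (al+B1-C1-de)) * (2*(al - de)) + 4*(-al*qd - de*qa)) / (2*(al+de))"
  proof -
    have F1: "1*(al+B1-C1-de) - (B1-(1-1)*qb) + (C1-(1-1)*qc) = al - de" by simp
    have R1: "sqrt ((al - de)\<^sup>2 + 4*(al-(1-1)*qa)*(de-(1-1)*qd)) = al + de" using s by simp
    show ?thesis unfolding psiF_def Let_def F1 R1 by (simp add: algebra_simps)
  qed
  then show ?thesis using pos by (simp add: field_simps)
qed

lemma pw_summable:
  assumes nn: "\<And>n. p n \<ge> 0" and s0: "summable p" and y: "0 \<le> y" "y \<le> (1::real)"
  shows "summable (\<lambda>n. p n * y ^ n)"
proof (rule summable_comparison_test'[OF s0])
  fix n show "norm (p n * y ^ n) \<le> p n" using nn[of n] y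
    by (simp add: abs_mult mult_left_le power_le_one)
qed

lemma genf_rep:
  assumes nn: "\<And>n. r (1 - int n) i \<ge> 0" and s0: "summable (\<lambda>n. r (1 - int n) i)"
    and s: "summable (\<lambda>n. real n * r (1 - int n) i)" and y: "0 \<le> y" "y \<le> 1"
  shows "genf r i y = genf r i 1 - (1 - y) * Qs (\<lambda>n. r (1 - int n) i) y"
  unfolding genf_def using Qs_eq[of "\<lambda>n. r (1 - int n) i", OF nn s0 s y] by simp

lemma genf_cont:
  assumes nn: "\<And>n. r (1 - int n) i \<ge> 0" and s0: "summable (\<lambda>n. r (1 - int n) i)"
    and s: "summable (\<lambda>n. real n * r (1 - int n) i)"
  shows "continuous_on {0..1} (genf r i)"
proof -
  have "continuous_on {0..1} (\<lambda>y. genf r i 1 - (1 - y) * Qs (\<lambda>n. r (1 - int n) i) y)"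
    using Qs_cont[of "\<lambda>n. r (1 - int n) i", OF nn s] by (intro continuous_intros) auto
  moreover have "\<And>y. y \<in> {0..1} \<Longrightarrow> genf r i 1 - (1 - y) * Qs (\<lambda>n. r (1 - int n) i) y = genf r i y"
  proof -
    fix y :: real assume "y \<in> {0..1}"
    then show "genf r i 1 - (1 - y) * Qs (\<lambda>n. r (1 - int n) i) y = genf r i y"
      using genf_rep[of r i y, OF nn s0 s] by simp
  qed
  ultimately show ?thesis by (rule continuous_on_eq)
qed

lemma genf_nonneg:
  assumes nn: "\<And>n. r (1 - int n) i \<ge> 0" and s0: "summable (\<lambda>n. r (1 - int n) i)"
    and y: "0 \<le> y" "y \<le> 1"
  shows "genf r i y \<ge> 0"
  unfolding genf_def using nn y by (intro suminf_nonneg pw_summable[OF nn s0 y]) simp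

lemma genf_zero: "genf r i 0 = r 1 i"
  unfolding genf_def using powser_zero[of "\<lambda>n. r (1 - int n) i"] by simp

lemma deriv_Qs: "genf_deriv1 r i = Qs (\<lambda>n. r (1 - int n) i) 1"
  unfolding genf_deriv1_def Qs_one ..

theorem lemma3:
  fixes c :: nat
    and a b cc d :: "int \<Rightarrow> nat \<Rightarrow> real"
    and x :: "nat \<Rightarrow> real"
  assumes c_pos: "c \<ge> 1"
    and nonneg: "\<And>i k. i \<in> {1..c} \<Longrightarrow> k \<le> 1 \<Longrightarrow>
                   a k i \<ge> 0 \<and> b k i \<ge> 0 \<and> cc k i \<ge> 0 \<and> d k i \<ge> 0"
    and A_i: "\<And>i. i \<in> {1..c} \<Longrightarrow>
                summable (\<lambda>n. a (1 - int n) i) \<and> summable (\<lambda>n. b (1 - int n) i) \<and>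
                summable (\<lambda>n. cc (1 - int n) i) \<and> summable (\<lambda>n. d (1 - int n) i)"
    and A_ii: "\<And>i. i \<in> {1..c} \<Longrightarrow> genf a i 1 > 0 \<and> genf d i 1 > 0"
    and A_iii: "\<And>i. i \<in> {1..c} \<Longrightarrow>
                summable (\<lambda>n. real n * a (1 - int n) i) \<and> summable (\<lambda>n. real n * b (1 - int n) i) \<and>
                summable (\<lambda>n. real n * cc (1 - int n) i) \<and> summable (\<lambda>n. real n * d (1 - int n) i)"
    and A_iv: "\<And>i. i \<in> {1..c} \<Longrightarrow> a 1 i = 0 \<or> d 1 i = 0"
    and A_v: "\<And>i. i \<in> {1..c} \<Longrightarrow> b 1 i = cc 1 i \<and> b 1 i \<noteq> 0"
    and E: "0 < (\<Sum>i=1..c. (1 / (genf a i 1 + genf d i 1)) *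
              (genf d i 1 * (genf_deriv1 a i - genf a i 1 + genf_deriv1 b i - genf b i 1)
               + genf a i 1 * (genf_deriv1 cc i - genf cc i 1 + genf_deriv1 d i - genf d i 1)))"
    and x_pm: "\<And>i. i \<in> {1..c} \<Longrightarrow> x i \<in> {-1, 1}"
  shows "\<exists>\<beta>0::real. 0 < \<beta>0 \<and> \<beta>0 < 1 \<and>
    0 = (\<Sum>i=1..c.
          x i * sqrt ((\<beta>0 * (genf a i 1 + genf b i 1 - genf cc i 1 - genf d i 1)
                        - genf b i \<beta>0 + genf cc i \<beta>0)\<^sup>2
                      + 4 * genf a i \<beta>0 * genf d i \<beta>0)
          + genf b i \<beta>0 + genf cc i \<beta>0
          - \<beta>0 * (genf a i 1 + genf b i 1 + genf cc i 1 + genf d i 1))"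
proof -
  let ?I = "{1..c}"
  have nnp: "\<And>i n. i \<in> ?I \<Longrightarrow> a (1 - int n) i \<ge> 0 \<and> b (1 - int n) i \<ge> 0 \<and> cc (1 - int n) i \<ge> 0 \<and> d (1 - int n) i \<ge> 0"
    using nonneg by simp
  define QA where "QA i = Qs (\<lambda>n. a (1 - int n) i)" for i
  define QB where "QB i = Qs (\<lambda>n. b (1 - int n) i)" for i
  define QC where "QC i = Qs (\<lambda>n. cc (1 - int n) i)" for i
  define QD where "QD i = Qs (\<lambda>n. d (1 - int n) i)" for i
  define al where "al i = genf a i 1" for i
  define B1 where "B1 i = genf b i 1" for i
  define C1 where "C1 i = genf cc i 1" for i
  define de where "de i = genf d i 1" for i
  have repA: "\<And>i y. i \<in> ?I \<Longrightarrow> 0 \<le> y \<Longrightarrow> y \<le> 1 \<Longrightarrow> genf a i y = al i - (1 - y) * QA i y"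
    unfolding al_def QA_def using nnp A_i A_iii by (intro genf_rep) auto
  have repB: "\<And>i y. i \<in> ?I \<Longrightarrow> 0 \<le> y \<Longrightarrow> y \<le> 1 \<Longrightarrow> genf b i y = B1 i - (1 - y) * QB i y"
    unfolding B1_def QB_def using nnp A_i A_iii by (intro genf_rep) auto
  have repC: "\<And>i y. i \<in> ?I \<Longrightarrow> 0 \<le> y \<Longrightarrow> y \<le> 1 \<Longrightarrow> genf cc i y = C1 i - (1 - y) * QC i y"
    unfolding C1_def QC_def using nnp A_i A_iii by (intro genf_rep) auto
  have repD: "\<And>i y. i \<in> ?I \<Longrightarrow> 0 \<le> y \<Longrightarrow> y \<le> 1 \<Longrightarrow> genf d i y = de i - (1 - y) * QD i y"
    unfolding de_def QD_def using nnp A_i A_iii by (intro genf_rep) auto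
  have cA: "\<And>i. i \<in> ?I \<Longrightarrow> continuous_on {0..1} (genf a i)"
    using nnp A_i A_iii by (intro genf_cont) auto
  have cB: "\<And>i. i \<in> ?I \<Longrightarrow> continuous_on {0..1} (genf b i)"
    using nnp A_i A_iii by (intro genf_cont) auto
  have cC: "\<And>i. i \<in> ?I \<Longrightarrow> continuous_on {0..1} (genf cc i)"
    using nnp A_i A_iii by (intro genf_cont) auto
  have cD: "\<And>i. i \<in> ?I \<Longrightarrow> continuous_on {0..1} (genf d i)"
    using nnp A_i A_iii by (intro genf_cont) auto
  have cQA: "\<And>i. i \<in> ?I \<Longrightarrow> continuous_on {0..1} (QA i)"
    unfolding QA_def using nnp A_iii by (intro Qs_cont) auto
  have cQB: "\<And>i. i \<in> ?I \<Longrightarrow> continuous_on {0..1} (QB i)"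
    unfolding QB_def using nnp A_iii by (intro Qs_cont) auto
  have cQC: "\<And>i. i \<in> ?I \<Longrightarrow> continuous_on {0..1} (QC i)"
    unfolding QC_def using nnp A_iii by (intro Qs_cont) auto
  have cQD: "\<And>i. i \<in> ?I \<Longrightarrow> continuous_on {0..1} (QD i)"
    unfolding QD_def using nnp A_iii by (intro Qs_cont) auto
  have nA: "\<And>i y. i \<in> ?I \<Longrightarrow> 0 \<le> y \<Longrightarrow> y \<le> 1 \<Longrightarrow> genf a i y \<ge> 0"
    using nnp A_i by (intro genf_nonneg) auto
  have nB: "\<And>i y. i \<in> ?I \<Longrightarrow> 0 \<le> y \<Longrightarrow> y \<le> 1 \<Longrightarrow> genf b i y \<ge> 0"
    using nnp A_i by (intro genf_nonneg) auto
  have nC: "\<And>i y. i \<in> ?I \<Longrightarrow> 0 \<le> y \<Longrightarrow> y \<le> 1 \<Longrightarrow> genf cc i y \<ge> 0"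
    using nnp A_i by (intro genf_nonneg) auto
  have nD: "\<And>i y. i \<in> ?I \<Longrightarrow> 0 \<le> y \<Longrightarrow> y \<le> 1 \<Longrightarrow> genf d i y \<ge> 0"
    using nnp A_i by (intro genf_nonneg) auto
  have pos: "\<And>i. i \<in> ?I \<Longrightarrow> al i > 0 \<and> de i > 0" unfolding al_def de_def using A_ii by auto
  have A0: "\<And>i y. i \<in> ?I \<Longrightarrow> 0 \<le> y \<Longrightarrow> y \<le> 1 \<Longrightarrow> al i - (1-y) * QA i y \<ge> 0"
    using nA repA by metis
  have D0: "\<And>i y. i \<in> ?I \<Longrightarrow> 0 \<le> y \<Longrightarrow> y \<le> 1 \<Longrightarrow> de i - (1-y) * QD i y \<ge> 0"
    using nD repD by metis
  define f where "f = (\<lambda>\<beta>0. (\<Sum>i=1..c.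
          x i * sqrt ((\<beta>0 * (genf a i 1 + genf b i 1 - genf cc i 1 - genf d i 1)
                        - genf b i \<beta>0 + genf cc i \<beta>0)\<^sup>2
                      + 4 * genf a i \<beta>0 * genf d i \<beta>0)
          + genf b i \<beta>0 + genf cc i \<beta>0
          - \<beta>0 * (genf a i 1 + genf b i 1 + genf cc i 1 + genf d i 1)))"
  define G where "G = (\<lambda>y. \<Sum>i=1..c. x i * psiF (al i) (de i) (B1 i) (C1 i) (QA i y) (QB i y) (QC i y) (QD i y) y
        - QB i y - QC i y + (al i + B1 i + C1 i + de i))"
  define T1 where "T1 = (\<Sum>i=1..c. (x i - 1) * (al i + de i))"
  have fid: "f y = T1 + (1 - y) * G y" if y: "0 \<le> y" "y \<le> 1" for y
  proof -
    have "f y = (\<Sum>i=1..c. (x i - 1) * (al i + de i) + (1 - y) * (x i * psiF (al i) (de i) (B1 i) (C1 i) (QA i y) (QB i y) (QC i y) (QD i y) y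
        - QB i y - QC i y + (al i + B1 i + C1 i + de i)))"
      unfolding f_def
    proof (rule sum.cong[OF refl])
      fix i assume i: "i \<in> ?I"
      have A0: "al i - (1-y) * QA i y \<ge> 0" using nA[OF i y] repA[OF i y] by simp
      have D0: "de i - (1-y) * QD i y \<ge> 0" using nD[OF i y] repD[OF i y] by simp
      show "x i * sqrt ((y * (genf a i 1 + genf b i 1 - genf cc i 1 - genf d i 1)
                        - genf b i y + genf cc i y)\<^sup>2
                      + 4 * genf a i y * genf d i y)
          + genf b i y + genf cc i y
          - y * (genf a i 1 + genf b i 1 + genf cc i 1 + genf d i 1) = 
          (x i - 1) * (al i + de i) + (1 - y) * (x i * psiF (al i) (de i) (B1 i) (C1 i) (QA i y) (QB i y) (QC i y) (QD i y) y
        - QB i y - QC i y + (al i + B1 i + C1 i + de i))"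
        unfolding repA[OF i y] repB[OF i y] repC[OF i y] repD[OF i y]
        unfolding al_def[symmetric] B1_def[symmetric] C1_def[symmetric] de_def[symmetric]
        using term_identity[of "al i" "de i" y "QA i y" "QD i y" "x i" "B1 i" "C1 i" "QB i y" "QC i y", OF _ _ _ A0 D0] pos[OF i]
        by simp
    qed
    also have "\<dots> = T1 + (1 - y) * G y"
      unfolding T1_def G_def sum_distrib_left by (rule sum.distrib)
    finally show ?thesis .
  qed
  have fcont: "continuous_on {0..1} f"
    unfolding f_def using cA cB cC cD
    by (intro continuous_intros) auto
  have Gcont: "continuous_on {0..1} G"
    unfolding G_def psiF_def Let_def
    apply (intro continuous_intros)
    using cQA cQB cQC cQD apply auto
    subgoal for i y
    proof -
      assume i: "Suc 0 \<le> i" "i \<le> c" and y: "0 \<le> y" "y \<le> 1"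
      have ii: "i \<in> ?I" using i by simp
      have "0 \<le> (4 * al i - 4 * ((1 - y) * QA i y)) * (de i - (1 - y) * QD i y)"
        using A0[OF ii y] D0[OF ii y] by simp
      note sq = real_sqrt_ge_zero[OF add_nonneg_nonneg[OF zero_le_power2[of "y * (al i + B1 i - C1 i - de i) - (B1 i - (1 - y) * QB i y) + (C1 i - (1 - y) * QC i y)"] this]]
      assume "sqrt ((y * (al i + B1 i - C1 i - de i) - (B1 i - (1 - y) * QB i y) +
               (C1 i - (1 - y) * QC i y))\<^sup>2 +
              (4 * al i - 4 * ((1 - y) * QA i y)) * (de i - (1 - y) * QD i y)) + (al i + de i) = 0"
      then show False using sq pos[OF ii] by linarith
    qed
    done
  have f0: "f 0 > 0"
  proof -
    have "f 0 = (\<Sum>i=1..c. 2 * b 1 i)"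
      unfolding f_def genf_zero
    proof (rule sum.cong[OF refl])
      fix i assume i: "i \<in> ?I"
      have "a 1 i * d 1 i = 0" using A_iv[OF i] by auto
      moreover have "cc 1 i = b 1 i" using A_v[OF i] by simp
      ultimately show "x i * sqrt ((0 * (genf a i 1 + genf b i 1 - genf cc i 1 - genf d i 1) - b 1 i + cc 1 i)\<^sup>2 + 4 * a 1 i * d 1 i)
          + b 1 i + cc 1 i - 0 * (genf a i 1 + genf b i 1 + genf cc i 1 + genf d i 1) = 2 * b 1 i"
        by (simp add: mult.assoc)
    qed
    also have "\<dots> > 0"
    proof (rule sum_pos)
      show "finite ?I" by simp
      show "?I \<noteq> {}" using c_pos by simp
      fix i assume i: "i \<in> ?I"
      have "b 1 i \<ge> 0" using nonneg[OF i, of 1] by simp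
      then show "2 * b 1 i > 0" using A_v[OF i] by simp
    qed
    finally show ?thesis .
  qed
  have f1: "f 1 = T1" using fid[of 1] by simp
  have T1le: "T1 \<le> 0" unfolding T1_def
  proof (rule sum_nonpos)
    fix i assume i: "i \<in> ?I"
    show "(x i - 1) * (al i + de i) \<le> 0" using x_pm[OF i] pos[OF i]
      by (auto intro: mult_nonpos_nonneg)
  qed
  have done_if: "\<exists>\<beta>0. 0 < \<beta>0 \<and> \<beta>0 < 1 \<and> 0 = f \<beta>0" if b1: "0 < \<beta>1" "\<beta>1 \<le> 1" "f \<beta>1 < 0" for \<beta>1
  proof -
    have "continuous_on {0..\<beta>1} f" using fcont by (rule continuous_on_subset) (use b1 in auto)
    then obtain z where z: "0 \<le> z" "z \<le> \<beta>1" "f z = 0"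
      using IVT2'[of f \<beta>1 0 0] b1 f0 by auto
    have "z \<noteq> 0" using z f0 by auto
    moreover have "z \<noteq> \<beta>1" using z b1 by auto
    ultimately show ?thesis using z b1 by (intro exI[of _ z]) auto
  qed
  have ex: "\<exists>\<beta>0. 0 < \<beta>0 \<and> \<beta>0 < 1 \<and> 0 = f \<beta>0"
  proof (cases "T1 < 0")
    case True
    then show ?thesis using done_if[of 1] f1 by simp
  next
    case False
    then have T0: "T1 = 0" using T1le by simp
    have x1: "x i = 1" if i: "i \<in> ?I" for i
    proof (rule ccontr)
      assume "x i \<noteq> 1"
      then have xi: "x i = -1" using x_pm[OF i] by auto
      have "T1 = (x i - 1) * (al i + de i) + (\<Sum>j\<in>?I - {i}. (x j - 1) * (al j + de j))"
        unfolding T1_def using i by (simp add: sum.remove)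
      also have "(\<Sum>j\<in>?I - {i}. (x j - 1) * (al j + de j)) \<le> 0"
      proof (rule sum_nonpos)
        fix j assume j: "j \<in> ?I - {i}"
        then have j': "j \<in> ?I" by simp
        show "(x j - 1) * (al j + de j) \<le> 0" using x_pm[OF j'] pos[OF j']
          by (auto intro: mult_nonpos_nonneg)
      qed
      then have "T1 < 0" using calculation xi pos[OF i] by simp
      then show False using T0 by simp
    qed
    have G1: "G 1 = -2 * (\<Sum>i=1..c. (1 / (genf a i 1 + genf d i 1)) *
              (genf d i 1 * (genf_deriv1 a i - genf a i 1 + genf_deriv1 b i - genf b i 1)
               + genf a i 1 * (genf_deriv1 cc i - genf cc i 1 + genf_deriv1 d i - genf d i 1)))"
      unfolding G_def sum_distrib_left
    proof (rule sum.cong[OF refl])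
      fix i assume i: "i \<in> ?I"
      show "x i * psiF (al i) (de i) (B1 i) (C1 i) (QA i 1) (QB i 1) (QC i 1) (QD i 1) 1 - QB i 1 - QC i 1 + (al i + B1 i + C1 i + de i)
        = -2 * ((1 / (genf a i 1 + genf d i 1)) *
              (genf d i 1 * (genf_deriv1 a i - genf a i 1 + genf_deriv1 b i - genf b i 1)
               + genf a i 1 * (genf_deriv1 cc i - genf cc i 1 + genf_deriv1 d i - genf d i 1)))"
        unfolding x1[OF i] deriv_Qs QA_def[symmetric] QB_def[symmetric] QC_def[symmetric] QD_def[symmetric]
          al_def[symmetric] B1_def[symmetric] C1_def[symmetric] de_def[symmetric]
        using psi_one[of "al i" "de i" "B1 i" "C1 i" "QA i 1" "QB i 1" "QC i 1" "QD i 1"] pos[OF i] by simp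
    qed
    have Gneg: "G 1 < 0" using G1 E by simp
    have "1 \<in> {0..1::real}" by simp
    with Gcont Gneg obtain \<delta> where dpos: "\<delta> > 0"
        and dl: "\<And>y. y \<in> {0..1} \<Longrightarrow> dist y 1 < \<delta> \<Longrightarrow> dist (G y) (G 1) < - G 1"
      unfolding continuous_on_iff by (metis neg_0_less_iff_less)
    define \<beta>1 where "\<beta>1 = max (1/2) (1 - \<delta>/2)"
    have b1: "0 < \<beta>1" "\<beta>1 < 1" unfolding \<beta>1_def using dpos by auto
    have "dist \<beta>1 1 < \<delta>" unfolding \<beta>1_def dist_real_def using dpos by auto
    then have "dist (G \<beta>1) (G 1) < - G 1" using dl b1 by auto
    then have "G \<beta>1 < 0" unfolding dist_real_def by auto
    then have "f \<beta>1 < 0" using fid[of \<beta>1] b1 T0 by (simp add: mult_pos_neg)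
    then show ?thesis using done_if[of \<beta>1] b1 by simp
  qed
  then show ?thesis unfolding f_def .
qed

end
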